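(* Let $1\le k<n$. Every RYD in $\mathbb{Y}_{OG(k,2n+1)}$ is a $W^{OG(k,2n+1)}$-diagram, i.e. $\mathbb{Y}_{OG(k,2n+1)}\subseteq\Theta(k,2n+1)$.
   Context: Root system $B_n$: positive roots $e_a\pm e_b$ ($a<b$), $e_a$; simple roots $e_i-e_{i+1}$ ($i<n$), $e_n$; order $\alpha\le\beta$ iff $\beta-\alpha$ is a nonnegative integer combination of simple roots. $W^{OG(k,2n+1)}$ is the set of signed permutations $w=(y_1,\dots,y_{k-r},\overline{z_r},\dots,\overline{z_1},v_1,\dots,v_{n-k})$ of $1,\dots,n$ (bars = negative entries) with $0\le r\le k$, $y_1<\dots<y_{k-r}$, $z_r>\dots>z_1$, $v_1<\dots<v_{n-k}$, acting by $e_a\mapsto\pm e_{|w(a)|}$ (minus if barred); $\mathrm{Inv}(w)$ is the set of positive roots sent to negative roots, and $\mathbb{Y}_{OG(k,2n+1)}=\{\mathrm{Inv}(w)\}$. The base region is the set of roots $e_a\pm e_b$ ($a\le k<b$) and $e_a$ ($a\le k$); its $i$-th row ($1\le i\le k$) consists of $e_{k+1-i}\pm e_b$ ($b>k$) and $e_{k+1-i}$. The top region is the set of roots $e_a+e_b$ with $a<b\le k$. Both regions are subposets. A subset $S$ of the union of the two regions is a $W^{OG(k,2n+1)}$-diagram if $S$ meets each region in a lower order ideal of that region and satisfies the support condition: for each top-region root $e_a+e_b$ ($a<b\le k$), if $S$ contains more than $2n+1-2k$ roots of the base rows indexed by $a$ and $b$ (i.e. rows $k+1-a$ and $k+1-b$)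 combined, then $e_a+e_b\in S$, and if it contains fewer than $2n+1-2k$ such roots then $e_a+e_b\notin S$. $\Theta(k,2n+1)$ is the set of these diagrams. *)

theory Defs
  imports Main
begin

text \<open>Vectors in the span of e_1,...,e_n are represented as functions nat => int
  (coefficient of e_j at index j). Roots of B_n are such vectors.\<close>

type_synonym vec = "nat \<Rightarrow> int"

definition ev :: "nat \<Rightarrow> vec" where
  "ev a = (\<lambda>j. if j = a then 1 else 0)"

definition vadd :: "vec \<Rightarrow> vec \<Rightarrow> vec" where
  "vadd u v = (\<lambda>j. u j + v j)"

definition vsub :: "vec \<Rightarrow> vec \<Rightarrow> vec" where
  "vsub u v = (\<lambda>j. u j - v j)"

definition vneg :: "vec \<Rightarrow> vec" where
  "vneg v = (\<lambda>j. - v j)"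

definition pos_roots :: "nat \<Rightarrow> vec set" where
  "pos_roots n =
     {vsub (ev a) (ev b) | a b. 1 \<le> a \<and> a < b \<and> b \<le> n}
   \<union> {vadd (ev a) (ev b) | a b. 1 \<le> a \<and> a < b \<and> b \<le> n}
   \<union> {ev a | a. 1 \<le> a \<and> a \<le> n}"

definition neg_roots :: "nat \<Rightarrow> vec set" where
  "neg_roots n = vneg ` pos_roots n"

definition simple_root :: "nat \<Rightarrow> nat \<Rightarrow> vec" where
  "simple_root n i = (if i < n then vsub (ev i) (ev (i + 1)) else ev n)"

definition root_le :: "nat \<Rightarrow> vec \<Rightarrow> vec \<Rightarrow> bool" where
  "root_le n \<alpha> \<beta> \<longleftrightarrow>
     (\<exists>c :: nat \<Rightarrow> nat. \<forall>j. \<beta> j - \<alpha> j = (\<Sum>i\<in>{1..n}. int (c i) * simple_root n i j))"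

text \<open>Signed permutations of 1..n: w a is the (signed) image of a; a barred entry is negative.\<close>
definition signed_perm :: "nat \<Rightarrow> (nat \<Rightarrow> int) \<Rightarrow> bool" where
  "signed_perm n w \<longleftrightarrow>
     (\<forall>a\<in>{1..n}. w a \<noteq> 0) \<and> (\<forall>a. a \<notin> {1..n} \<longrightarrow> w a = 0) \<and>
     bij_betw (\<lambda>a. nat \<bar>w a\<bar>) {1..n} {1..n}"

text \<open>W^{OG(k,2n+1)}: w = (y_1..y_{k-r}, bar z_r .. bar z_1, v_1..v_{n-k}) with
  y increasing, z_r > ... > z_1, v increasing (all y, z, v positive).\<close>
definition W_OG :: "nat \<Rightarrow> nat \<Rightarrow> (nat \<Rightarrow> int) set" where
  "W_OG k n = {w. signed_perm n w \<and> (\<exists>r \<le> k.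
      (\<forall>a\<in>{1..k-r}. w a > 0) \<and>
      (\<forall>a\<in>{1..k-r}. \<forall>b\<in>{1..k-r}. a < b \<longrightarrow> w a < w b) \<and>
      (\<forall>a\<in>{k-r+1..k}. w a < 0) \<and>
      (\<forall>a\<in>{k-r+1..k}. \<forall>b\<in>{k-r+1..k}. a < b \<longrightarrow> \<bar>w a\<bar> > \<bar>w b\<bar>) \<and>
      (\<forall>a\<in>{k+1..n}. w a > 0) \<and>
      (\<forall>a\<in>{k+1..n}. \<forall>b\<in>{k+1..n}. a < b \<longrightarrow> w a < w b))}"

definition act :: "nat \<Rightarrow> (nat \<Rightarrow> int) \<Rightarrow> vec \<Rightarrow> vec" where
  "act n w v = (\<lambda>j. \<Sum>a\<in>{1..n}. if nat \<bar>w a\<bar> = j then sgn (w a) * v a else 0)"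

definition Inv :: "nat \<Rightarrow> (nat \<Rightarrow> int) \<Rightarrow> vec set" where
  "Inv n w = {\<alpha> \<in> pos_roots n. act n w \<alpha> \<in> neg_roots n}"

definition Y_OG :: "nat \<Rightarrow> nat \<Rightarrow> vec set set" where
  "Y_OG k n = Inv n ` W_OG k n"

definition base_row_idx :: "nat \<Rightarrow> nat \<Rightarrow> nat \<Rightarrow> vec set" where
  \<comment> \<open>roots of the base region with first index a, i.e. row k+1-a\<close>
  "base_row_idx k n a =
     {vsub (ev a) (ev b) | b. k < b \<and> b \<le> n}
   \<union> {vadd (ev a) (ev b) | b. k < b \<and> b \<le> n} \<union> {ev a}"

definition base_region :: "nat \<Rightarrow> nat \<Rightarrow> vec set" where
  "base_region k n = (\<Union>a\<in>{1..k}. base_row_idx k n a)"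

definition base_row :: "nat \<Rightarrow> nat \<Rightarrow> nat \<Rightarrow> vec set" where
  "base_row k n i = base_row_idx k n (k + 1 - i)"

definition top_region :: "nat \<Rightarrow> vec set" where
  "top_region k = {vadd (ev a) (ev b) | a b. 1 \<le> a \<and> a < b \<and> b \<le> k}"

definition lower_ideal :: "nat \<Rightarrow> vec set \<Rightarrow> vec set \<Rightarrow> bool" where
  "lower_ideal n R S \<longleftrightarrow> S \<subseteq> R \<and> (\<forall>\<beta>\<in>S. \<forall>\<alpha>\<in>R. root_le n \<alpha> \<beta> \<longrightarrow> \<alpha> \<in> S)"

definition is_W_OG_diagram :: "nat \<Rightarrow> nat \<Rightarrow> vec set \<Rightarrow> bool" where
  "is_W_OG_diagram k n S \<longleftrightarrow>
     S \<subseteq> base_region k n \<union> top_region k \<and>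
     lower_ideal n (base_region k n) (S \<inter> base_region k n) \<and>
     lower_ideal n (top_region k) (S \<inter> top_region k) \<and>
     (\<forall>a b. 1 \<le> a \<and> a < b \<and> b \<le> k \<longrightarrow>
        (let c = card (S \<inter> (base_row k n (k + 1 - a) \<union> base_row k n (k + 1 - b))) in
          (c > 2 * n + 1 - 2 * k \<longrightarrow> vadd (ev a) (ev b) \<in> S) \<and>
          (c < 2 * n + 1 - 2 * k \<longrightarrow> vadd (ev a) (ev b) \<notin> S)))"

definition Theta :: "nat \<Rightarrow> nat \<Rightarrow> vec set set" where
  "Theta k n = {S. is_W_OG_diagram k n S}"

end

theory Submission imports Defs begin

lemma ev_app: "ev a j = (if j = a then 1 else 0)" by (simp add: ev_def)

lemma act_ev:
  assumes "a \<in> {1..n}"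
  shows "act n w (ev a) = (\<lambda>j. sgn (w a) * ev (nat \<bar>w a\<bar>) j)"
proof
  fix j
  have "act n w (ev a) j = (\<Sum>x\<in>{1..n}. if x = a then (if nat \<bar>w a\<bar> = j then sgn (w a) else 0) else 0)"
    unfolding act_def by (rule sum.cong) (auto simp: ev_def)
  also have "\<dots> = (if nat \<bar>w a\<bar> = j then sgn (w a) else 0)" using assms by (simp add: sum.delta)
  finally show "act n w (ev a) j = sgn (w a) * ev (nat \<bar>w a\<bar>) j" by (auto simp: ev_def)
qed

lemma act_vadd: "act n w (vadd u v) = vadd (act n w u) (act n w v)"
  unfolding act_def vadd_def
  by (auto simp: fun_eq_iff sum.distrib[symmetric] intro!: sum.cong simp: algebra_simps)

lemma act_vsub: "act n w (vsub u v) = vsub (act n w u) (act n w v)"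
  unfolding act_def vsub_def
  by (auto simp: fun_eq_iff sum_subtractf[symmetric] intro!: sum.cong simp: algebra_simps)

lemma neg2:
  assumes "p \<in> {1..n}" "q \<in> {1..n}" "p \<noteq> q" "s \<in> {1,-1}" "t \<in> {1,-1}"
  shows "(\<lambda>j. s * ev p j + t * ev q j) \<in> neg_roots n \<longleftrightarrow> (if p < q then s = -1 else t = -1)"
proof
  assume "(\<lambda>j. s * ev p j + t * ev q j) \<in> neg_roots n"
  then obtain \<rho> where r: "\<rho> \<in> pos_roots n" and e: "(\<lambda>j. s * ev p j + t * ev q j) = vneg \<rho>"
    unfolding neg_roots_def by auto
  have E: "\<And>j. s * ev p j + t * ev q j = - \<rho> j" using e by (metis vneg_def)
  from r show "(if p < q then s = -1 else t = -1)"
    unfolding pos_roots_def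
  proof (elim UnE CollectE exE conjE)
    fix a b assume "\<rho> = vsub (ev a) (ev b)" "1 \<le> a" "a < b" "b \<le> n"
    then show ?thesis using E[of a] E[of b] E[of p] E[of q] assms
      by (auto simp: ev_def vsub_def split: if_splits)
  next
    fix a b assume "\<rho> = vadd (ev a) (ev b)" "1 \<le> a" "a < b" "b \<le> n"
    then show ?thesis using E[of a] E[of b] E[of p] E[of q] assms
      by (auto simp: ev_def vadd_def split: if_splits)
  next
    fix a assume "\<rho> = ev a" "1 \<le> a" "a \<le> n"
    then show ?thesis using E[of a] E[of p] E[of q] assms
      by (auto simp: ev_def split: if_splits)
  qed
next
  assume h: "(if p < q then s = -1 else t = -1)"
  have pa: "vadd (ev a) (ev b) \<in> pos_roots n" "vsub (ev a) (ev b) \<in> pos_roots n"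
    if "1 \<le> a" "a < b" "b \<le> n" for a b using that unfolding pos_roots_def by blast+
  show "(\<lambda>j. s * ev p j + t * ev q j) \<in> neg_roots n"
  proof (cases "p < q")
    case True
    then have s: "s = -1" using h by simp
    show ?thesis
    proof (cases "t = -1")
      case True
      have "(\<lambda>j. s * ev p j + t * ev q j) = vneg (vadd (ev p) (ev q))"
        using s True by (auto simp: fun_eq_iff vneg_def vadd_def)
      then show ?thesis unfolding neg_roots_def using pa(1)[of p q] \<open>p<q\<close> assms by auto
    next
      case False
      then have "t = 1" using assms by auto
      then have "(\<lambda>j. s * ev p j + t * ev q j) = vneg (vsub (ev p) (ev q))"
        using s by (auto simp: fun_eq_iff vneg_def vsub_def)
      then show ?thesis unfolding neg_roots_def using pa(2)[of p q] \<open>p<q\<close> assms by auto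
    qed
  next
    case False
    then have pq: "q < p" using assms by auto
    then have s: "t = -1" using h by simp
    show ?thesis
    proof (cases "s = -1")
      case True
      have "(\<lambda>j. s * ev p j + t * ev q j) = vneg (vadd (ev q) (ev p))"
        using s True by (auto simp: fun_eq_iff vneg_def vadd_def)
      then show ?thesis unfolding neg_roots_def using pa(1)[of q p] pq assms by auto
    next
      case False
      then have "s = 1" using assms by auto
      then have "(\<lambda>j. s * ev p j + t * ev q j) = vneg (vsub (ev q) (ev p))"
        using s by (auto simp: fun_eq_iff vneg_def vsub_def)
      then show ?thesis unfolding neg_roots_def using pa(2)[of q p] pq assms by auto
    qed
  qed
qed

lemma neg1:
  assumes "p \<in> {1..n}" "s \<in> {1,-1}"
  shows "(\<lambda>j. s * ev p j) \<in> neg_roots n \<longleftrightarrow> s = -1"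
proof
  assume "(\<lambda>j. s * ev p j) \<in> neg_roots n"
  then obtain \<rho> where r: "\<rho> \<in> pos_roots n" and e: "(\<lambda>j. s * ev p j) = vneg \<rho>"
    unfolding neg_roots_def by auto
  have E: "\<And>j. s * ev p j = - \<rho> j" using e by (metis vneg_def)
  from r show "s = -1"
    unfolding pos_roots_def
  proof (elim UnE CollectE exE conjE)
    fix a b assume "\<rho> = vsub (ev a) (ev b)" "1 \<le> a" "a < b" "b \<le> n"
    then show ?thesis using E[of a] E[of b] E[of p] assms
      by (auto simp: ev_def vsub_def split: if_splits)
  next
    fix a b assume "\<rho> = vadd (ev a) (ev b)" "1 \<le> a" "a < b" "b \<le> n"
    then show ?thesis using E[of a] E[of b] E[of p] assms
      by (auto simp: ev_def vadd_def split: if_splits)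
  next
    fix a assume "\<rho> = ev a" "1 \<le> a" "a \<le> n"
    then show ?thesis using E[of a] E[of p] assms
      by (auto simp: ev_def split: if_splits)
  qed
next
  assume "s = -1"
  then have "(\<lambda>j. s * ev p j) = vneg (ev p)" by (auto simp: fun_eq_iff vneg_def)
  moreover have "ev p \<in> pos_roots n" using assms unfolding pos_roots_def by auto
  ultimately show "(\<lambda>j. s * ev p j) \<in> neg_roots n" unfolding neg_roots_def by auto
qed

lemma psum_ev: "finite A \<Longrightarrow> sum (ev a) A = (if a \<in> A then 1 else 0)"
  by (simp add: ev_def sum.delta' cong: if_cong)

lemma psum_vsub: "sum (vsub u v) A = sum u A - sum v A"
  by (simp add: vsub_def sum_subtractf)

lemma psum_vadd: "sum (vadd u v) A = sum u A + sum v A"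
  by (simp add: vadd_def sum.distrib)

lemma sr_sum:
  assumes "i \<in> {1..n}" "1 \<le> j" "j \<le> n"
  shows "sum (simple_root n i) {1..j} = (if i = j then 1 else 0)"
proof (cases "i < n")
  case True
  then have "simple_root n i = vsub (ev i) (ev (i + 1))" by (simp add: simple_root_def)
  then show ?thesis using assms by (simp add: psum_vsub psum_ev)
next
  case False
  then have "simple_root n i = ev n" by (simp add: simple_root_def)
  then show ?thesis using assms False by (simp add: psum_ev)
qed

lemma root_le_psum:
  assumes "root_le n \<alpha> \<beta>" "1 \<le> j" "j \<le> n"
  shows "(\<Sum>x\<in>{1..j}. \<alpha> x) \<le> (\<Sum>x\<in>{1..j}. \<beta> x)"
proof -
  obtain c :: "nat \<Rightarrow> nat" where c: "\<And>x. \<beta> x - \<alpha> x = (\<Sum>i\<in>{1..n}. int (c i) * simple_root n i x)"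
    using assms(1) unfolding root_le_def by blast
  have "(\<Sum>x\<in>{1..j}. \<beta> x - \<alpha> x) = (\<Sum>x\<in>{1..j}. \<Sum>i\<in>{1..n}. int (c i) * simple_root n i x)"
    using c by simp
  also have "\<dots> = (\<Sum>i\<in>{1..n}. int (c i) * (\<Sum>x\<in>{1..j}. simple_root n i x))"
    by (subst sum.swap) (simp add: sum_distrib_left)
  also have "\<dots> = (\<Sum>i\<in>{1..n}. if i = j then int (c i) else 0)"
  proof (rule sum.cong[OF refl])
    fix i assume "i \<in> {1..n}"
    then show "int (c i) * sum (simple_root n i) {1..j} = (if i = j then int (c i) else 0)"
      using sr_sum[of i n j] assms(2,3) by simp
  qed
  also have "\<dots> = int (c j)" using assms(2,3) by (simp add: sum.delta')
  finally have "0 \<le> (\<Sum>x\<in>{1..j}. \<beta> x - \<alpha> x)" by simp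
  then show ?thesis by (simp add: sum_subtractf)
qed


lemma L1: "vsub (ev a) (ev x) = vsub (ev c) (ev y) \<Longrightarrow> a \<noteq> x \<Longrightarrow> a = c \<and> x = y"
proof -
  assume h: "vsub (ev a) (ev x) = vsub (ev c) (ev y)" "a \<noteq> x"
  have "vsub (ev a) (ev x) a = vsub (ev c) (ev y) a" "vsub (ev a) (ev x) x = vsub (ev c) (ev y) x"
    using h by auto
  then show ?thesis using h(2) by (auto simp: vsub_def ev_def split: if_splits)
qed

lemma L2: "vadd (ev a) (ev x) = vadd (ev c) (ev y) \<Longrightarrow> a < x \<Longrightarrow> c < y \<Longrightarrow> a = c \<and> x = y"
proof -
  assume h: "vadd (ev a) (ev x) = vadd (ev c) (ev y)" "a < x" "c < y"
  have "vadd (ev a) (ev x) a = vadd (ev c) (ev y) a" "vadd (ev a) (ev x) x = vadd (ev c) (ev y) x"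
    "vadd (ev a) (ev x) c = vadd (ev c) (ev y) c"
    using h by auto
  then show ?thesis using h(2,3) by (auto simp: vadd_def ev_def split: if_splits)
qed

lemma L3: "a \<noteq> x \<Longrightarrow> vsub (ev a) (ev x) \<noteq> vadd (ev c) (ev y)"
proof
  assume h: "a \<noteq> x" "vsub (ev a) (ev x) = vadd (ev c) (ev y)"
  have "vsub (ev a) (ev x) x = vadd (ev c) (ev y) x" using h by auto
  then show False using h(1) by (auto simp: vadd_def vsub_def ev_def split: if_splits)
qed

lemma L4: "a \<noteq> x \<Longrightarrow> vsub (ev a) (ev x) \<noteq> ev c"
proof
  assume h: "a \<noteq> x" "vsub (ev a) (ev x) = ev c"
  have "vsub (ev a) (ev x) x = ev c x" using h by auto
  then show False using h(1) by (auto simp: vsub_def ev_def split: if_splits)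
qed

lemma L5: "a \<noteq> x \<Longrightarrow> vadd (ev a) (ev x) \<noteq> ev c"
proof
  assume h: "a \<noteq> x" "vadd (ev a) (ev x) = ev c"
  have "vadd (ev a) (ev x) x = ev c x" "vadd (ev a) (ev x) a = ev c a" using h by auto
  then show False using h(1) by (auto simp: vadd_def ev_def split: if_splits)
qed
locale wog =
  fixes k n r :: nat and w :: "nat \<Rightarrow> int"
  assumes k1: "1 \<le> k" and kn: "k < n" and sp: "signed_perm n w" and rk: "r \<le> k"
  and Y: "\<forall>a\<in>{1..k-r}. w a > 0"
  and incY: "\<forall>a\<in>{1..k-r}. \<forall>b\<in>{1..k-r}. a < b \<longrightarrow> w a < w b"
  and Z: "\<forall>a\<in>{k-r+1..k}. w a < 0"
  and decZ: "\<forall>a\<in>{k-r+1..k}. \<forall>b\<in>{k-r+1..k}. a < b \<longrightarrow> \<bar>w a\<bar> > \<bar>w b\<bar>"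
  and V: "\<forall>a\<in>{k+1..n}. w a > 0"
  and incV: "\<forall>a\<in>{k+1..n}. \<forall>b\<in>{k+1..n}. a < b \<longrightarrow> w a < w b"
begin

lemma sp1: "\<forall>a\<in>{1..n}. w a \<noteq> 0" using sp unfolding signed_perm_def by blast
lemma sp3: "bij_betw (\<lambda>a. nat \<bar>w a\<bar>) {1..n} {1..n}" using sp unfolding signed_perm_def by blast

lemma nz: "1 \<le> a \<Longrightarrow> a \<le> n \<Longrightarrow> w a \<noteq> 0"
  using sp1 by simp

lemma pin: "1 \<le> a \<Longrightarrow> a \<le> n \<Longrightarrow> nat \<bar>w a\<bar> \<in> {1..n}"
  using sp3 unfolding bij_betw_def by (metis atLeastAtMost_iff image_eqI)

lemma pinj: "1 \<le> a \<Longrightarrow> a \<le> n \<Longrightarrow> 1 \<le> b \<Longrightarrow> b \<le> n \<Longrightarrow> a \<noteq> b \<Longrightarrow> \<bar>w a\<bar> \<noteq> \<bar>w b\<bar>"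
proof
  assume h: "1 \<le> a" "a \<le> n" "1 \<le> b" "b \<le> n" "a \<noteq> b" "\<bar>w a\<bar> = \<bar>w b\<bar>"
  have "inj_on (\<lambda>a. nat \<bar>w a\<bar>) {1..n}" using sp3 unfolding bij_betw_def by blast
  then show False using h unfolding inj_on_def by (metis atLeastAtMost_iff)
qed

lemma sgn_cases: "1 \<le> a \<Longrightarrow> a \<le> n \<Longrightarrow> sgn (w a) \<in> {1,-1}"
  using nz by (auto simp: sgn_if)

lemma inv_e:
  assumes "1 \<le> a" "a \<le> n"
  shows "ev a \<in> Inv n w \<longleftrightarrow> w a < 0"
proof -
  have pr: "ev a \<in> pos_roots n" using assms unfolding pos_roots_def by auto
  have "act n w (ev a) \<in> neg_roots n \<longleftrightarrow> sgn (w a) = -1"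
  proof -
    have "act n w (ev a) = (\<lambda>j. sgn (w a) * ev (nat \<bar>w a\<bar>) j)" using act_ev assms by simp
    then show ?thesis using neg1[OF pin[OF assms] sgn_cases[OF assms]] by simp
  qed
  then show ?thesis using pr unfolding Inv_def by (auto simp: sgn_if)
qed

lemma act_vsub_ev:
  assumes "1 \<le> a" "a \<le> n" "1 \<le> b" "b \<le> n"
  shows "act n w (vsub (ev a) (ev b)) = (\<lambda>j. sgn (w a) * ev (nat \<bar>w a\<bar>) j + (- sgn (w b)) * ev (nat \<bar>w b\<bar>) j)"
proof -
  have A: "act n w (ev a) = (\<lambda>j. sgn (w a) * ev (nat \<bar>w a\<bar>) j)" by (rule act_ev) (use assms in auto)
  have B: "act n w (ev b) = (\<lambda>j. sgn (w b) * ev (nat \<bar>w b\<bar>) j)" by (rule act_ev) (use assms in auto)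
  show ?thesis unfolding act_vsub A B by (simp add: vsub_def fun_eq_iff)
qed

lemma act_vadd_ev:
  assumes "1 \<le> a" "a \<le> n" "1 \<le> b" "b \<le> n"
  shows "act n w (vadd (ev a) (ev b)) = (\<lambda>j. sgn (w a) * ev (nat \<bar>w a\<bar>) j + sgn (w b) * ev (nat \<bar>w b\<bar>) j)"
proof -
  have A: "act n w (ev a) = (\<lambda>j. sgn (w a) * ev (nat \<bar>w a\<bar>) j)" by (rule act_ev) (use assms in auto)
  have B: "act n w (ev b) = (\<lambda>j. sgn (w b) * ev (nat \<bar>w b\<bar>) j)" by (rule act_ev) (use assms in auto)
  show ?thesis unfolding act_vadd A B by (simp add: vadd_def fun_eq_iff)
qed

lemma inv_m:
  assumes "1 \<le> a" "a < b" "b \<le> n"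
  shows "vsub (ev a) (ev b) \<in> Inv n w \<longleftrightarrow> (if \<bar>w a\<bar> < \<bar>w b\<bar> then w a < 0 else w b > 0)"
proof -
  have pr: "vsub (ev a) (ev b) \<in> pos_roots n" using assms unfolding pos_roots_def by blast
  have ne: "nat \<bar>w a\<bar> \<noteq> nat \<bar>w b\<bar>" using pinj[of a b] assms by auto
  have s2: "- sgn (w b) \<in> {1,-1}" using sgn_cases[of b] assms by auto
  have "act n w (vsub (ev a) (ev b)) \<in> neg_roots n \<longleftrightarrow>
     (if nat \<bar>w a\<bar> < nat \<bar>w b\<bar> then sgn (w a) = -1 else - sgn (w b) = -1)"
    unfolding act_vsub_ev[of a b, OF assms(1) _ _ assms(3), OF less_imp_le[OF less_le_trans[OF assms(2,3)]] order.strict_implies_order[OF le_less_trans[OF assms(1,2)]]] using assms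
    by (intro neg2 pin ne sgn_cases s2) auto
  then show ?thesis using pr nz[of a] nz[of b] assms unfolding Inv_def by (auto simp: sgn_if)
qed

lemma inv_p:
  assumes "1 \<le> a" "a < b" "b \<le> n"
  shows "vadd (ev a) (ev b) \<in> Inv n w \<longleftrightarrow> (if \<bar>w a\<bar> < \<bar>w b\<bar> then w a < 0 else w b < 0)"
proof -
  have pr: "vadd (ev a) (ev b) \<in> pos_roots n" using assms unfolding pos_roots_def by blast
  have ne: "nat \<bar>w a\<bar> \<noteq> nat \<bar>w b\<bar>" using pinj[of a b] assms by auto
  have "act n w (vadd (ev a) (ev b)) \<in> neg_roots n \<longleftrightarrow>
     (if nat \<bar>w a\<bar> < nat \<bar>w b\<bar> then sgn (w a) = -1 else sgn (w b) = -1)"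
    unfolding act_vadd_ev[of a b, OF assms(1) _ _ assms(3), OF less_imp_le[OF less_le_trans[OF assms(2,3)]] order.strict_implies_order[OF le_less_trans[OF assms(1,2)]]] using assms
    by (intro neg2 pin ne sgn_cases) auto
  then show ?thesis using pr nz[of a] nz[of b] assms unfolding Inv_def by (auto simp: sgn_if)
qed

lemma wY: "1 \<le> a \<Longrightarrow> a \<le> k - r \<Longrightarrow> w a > 0" using Y[rule_format, of a] by simp
lemma wZ: "k - r < a \<Longrightarrow> a \<le> k \<Longrightarrow> w a < 0" using Z[rule_format, of a] by simp
lemma wV: "k < a \<Longrightarrow> a \<le> n \<Longrightarrow> w a > 0" using V[rule_format, of a] by simp
lemma iY: "1 \<le> a \<Longrightarrow> a < b \<Longrightarrow> b \<le> k - r \<Longrightarrow> w a < w b" using incY[rule_format, of a b] by simp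
lemma dZ: "k - r < a \<Longrightarrow> a < b \<Longrightarrow> b \<le> k \<Longrightarrow> \<bar>w a\<bar> > \<bar>w b\<bar>" using decZ[rule_format, of a b] by simp
lemma iV: "k < a \<Longrightarrow> a < b \<Longrightarrow> b \<le> n \<Longrightarrow> w a < w b" using incV[rule_format, of a b] by simp

lemma base_m: "1 \<le> a \<Longrightarrow> a \<le> k \<Longrightarrow> k < b \<Longrightarrow> b \<le> n \<Longrightarrow> vsub (ev a) (ev b) \<in> base_region k n"
  unfolding base_region_def base_row_idx_def by (rule UN_I[of a]) auto
lemma base_p: "1 \<le> a \<Longrightarrow> a \<le> k \<Longrightarrow> k < b \<Longrightarrow> b \<le> n \<Longrightarrow> vadd (ev a) (ev b) \<in> base_region k n"
  unfolding base_region_def base_row_idx_def by (rule UN_I[of a]) auto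
lemma base_e: "1 \<le> a \<Longrightarrow> a \<le> k \<Longrightarrow> ev a \<in> base_region k n"
  unfolding base_region_def base_row_idx_def by (rule UN_I[of a]) auto
lemma top_p: "1 \<le> a \<Longrightarrow> a < b \<Longrightarrow> b \<le> k \<Longrightarrow> vadd (ev a) (ev b) \<in> top_region k"
  unfolding top_region_def by auto

lemma Inv_sub: "Inv n w \<subseteq> base_region k n \<union> top_region k"
proof
  fix \<alpha> assume h: "\<alpha> \<in> Inv n w"
  then have "\<alpha> \<in> pos_roots n" unfolding Inv_def by blast
  then show "\<alpha> \<in> base_region k n \<union> top_region k"
    unfolding pos_roots_def
  proof (elim UnE CollectE exE conjE)
    fix a b assume e: "\<alpha> = vsub (ev a) (ev b)" "1 \<le> a" "a < b" "b \<le> n"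
    then have i: "(if \<bar>w a\<bar> < \<bar>w b\<bar> then w a < 0 else w b > 0)" using h inv_m by simp
    have "a \<le> k"
    proof (rule ccontr)
      assume "\<not> a \<le> k"
      then show False using i wV[of a] wV[of b] iV[of a b] e by (auto split: if_splits)
    qed
    moreover have "k < b"
    proof (rule ccontr)
      assume nb: "\<not> k < b"
      show False
      proof (cases "b \<le> k - r")
        case True then show ?thesis using i wY[of a] wY[of b] iY[of a b] e by (auto split: if_splits)
      next
        case False
        then show ?thesis using i nb wZ[of b] e wY[of a] dZ[of a b]
          by (cases "a \<le> k - r") (auto split: if_splits)
      qed
    qed
    ultimately show ?thesis using base_m e by auto
  next
    fix a b assume e: "\<alpha> = vadd (ev a) (ev b)" "1 \<le> a" "a < b" "b \<le> n"
    then have i: "(if \<bar>w a\<bar> < \<bar>w b\<bar> then w a < 0 else w b < 0)" using h inv_p by simp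
    show ?thesis
    proof (cases "b \<le> k")
      case True then show ?thesis using top_p e by auto
    next
      case False
      then have "w a < 0" using i wV[of b] e by (auto split: if_splits)
      then have "a \<le> k" using wV[of a] e by force
      then show ?thesis using base_p e False by auto
    qed
  next
    fix a assume e: "\<alpha> = ev a" "1 \<le> a" "a \<le> n"
    then have "w a < 0" using h inv_e by simp
    then have "a \<le> k" using wV[of a] e by force
    then show ?thesis using base_e e by auto
  qed
qed

lemma iY': "1 \<le> a \<Longrightarrow> a \<le> b \<Longrightarrow> b \<le> k - r \<Longrightarrow> w a \<le> w b"
  using iY[of a b] by (cases "a = b") auto
lemma dZ': "k - r < a \<Longrightarrow> a \<le> b \<Longrightarrow> b \<le> k \<Longrightarrow> \<bar>w b\<bar> \<le> \<bar>w a\<bar>"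
  using dZ[of a b] by (cases "a = b") auto
lemma iV': "k < a \<Longrightarrow> a \<le> b \<Longrightarrow> b \<le> n \<Longrightarrow> w a \<le> w b"
  using iV[of a b] by (cases "a = b") auto

lemma base_cases:
  assumes "\<alpha> \<in> base_region k n"
  obtains (m) a b where "\<alpha> = vsub (ev a) (ev b)" "1 \<le> a" "a \<le> k" "k < b" "b \<le> n"
    | (p) a b where "\<alpha> = vadd (ev a) (ev b)" "1 \<le> a" "a \<le> k" "k < b" "b \<le> n"
    | (e) a where "\<alpha> = ev a" "1 \<le> a" "a \<le> k"
  using assms unfolding base_region_def base_row_idx_def by auto

lemma ps: "root_le n \<alpha> \<beta> \<Longrightarrow> 1 \<le> j \<Longrightarrow> j \<le> n \<Longrightarrow> sum \<alpha> {1..j} \<le> sum \<beta> {1..j}"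
  using root_le_psum by simp

lemmas pss = psum_vsub psum_vadd psum_ev

lemma base_ideal_step:
  assumes "\<beta> \<in> Inv n w" "\<beta> \<in> base_region k n" "\<alpha> \<in> base_region k n" "root_le n \<alpha> \<beta>"
  shows "\<alpha> \<in> Inv n w"
  using assms(2)
proof (cases rule: base_cases)
  case (e c)
  then have wc: "w c < 0" using assms(1) inv_e kn by simp
  then have cZ: "k - r < c" using wY[of c] e by force
  from assms(3) show ?thesis
  proof (cases rule: base_cases)
    case (m a b)
    have "sum \<alpha> {1..a} \<le> sum \<beta> {1..a}" using ps[OF assms(4), of a] m kn by simp
    then have "c \<le> a" using m e by (simp add: pss split: if_splits)
    then show ?thesis using m inv_m[of a b] wZ[of a] wV[of b] cZ by auto
  next
    case (p a b)
    have "sum \<alpha> {1..n} \<le> sum \<beta> {1..n}" using ps[OF assms(4), of n] kn by simp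
    then show ?thesis using p e kn by (simp add: pss)
  next
    case (e a)
    have "sum \<alpha> {1..a} \<le> sum \<beta> {1..a}" using ps[OF assms(4), of a] e kn by simp
    then have "c \<le> a" using e \<open>\<beta> = ev c\<close> by (simp add: pss split: if_splits)
    then show ?thesis using e inv_e[of a] wZ[of a] cZ kn by auto
  qed
next
  case (m c d)
  then have ic: "(if \<bar>w c\<bar> < \<bar>w d\<bar> then w c < 0 else w d > 0)" using assms(1) inv_m[of c d] by simp
  from assms(3) show ?thesis
  proof (cases rule: base_cases)
    case (m a b)
    have "sum \<alpha> {1..a} \<le> sum \<beta> {1..a}" using ps[OF assms(4), of a] m kn by simp
    then have ca: "c \<le> a" using m \<open>\<beta> = vsub (ev c) (ev d)\<close> \<open>k < d\<close> by (simp add: pss split: if_splits)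
    have "sum \<alpha> {1..b-1} \<le> sum \<beta> {1..b-1}" using ps[OF assms(4), of "b-1"] m kn by simp
    then have bd: "b \<le> d" using m \<open>\<beta> = vsub (ev c) (ev d)\<close> \<open>k < d\<close> ca by (simp add: pss split: if_splits)
    show ?thesis
    proof (cases "a \<le> k - r")
      case True
      then have "w c > 0" "w a > 0" "w c \<le> w a" "w b \<le> w d" "w b > 0"
        using wY[of c] wY[of a] iY'[of c a] iV'[of b d] wV[of b] m ca bd \<open>1 \<le> c\<close> \<open>d \<le> n\<close> by auto
      then show ?thesis using ic inv_m[of a b] m by (auto split: if_splits)
    next
      case False
      then show ?thesis using m inv_m[of a b] wZ[of a] wV[of b] by auto
    qed
  next
    case (p a b)
    have "sum \<alpha> {1..n} \<le> sum \<beta> {1..n}" using ps[OF assms(4), of n] kn by simp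
    then show ?thesis using p \<open>\<beta> = vsub (ev c) (ev d)\<close> \<open>d \<le> n\<close> \<open>1 \<le> c\<close> \<open>c \<le> k\<close> \<open>k < d\<close> by (simp add: pss)
  next
    case (e a)
    have "sum \<alpha> {1..n} \<le> sum \<beta> {1..n}" using ps[OF assms(4), of n] kn by simp
    then show ?thesis using e \<open>\<beta> = vsub (ev c) (ev d)\<close> \<open>d \<le> n\<close> \<open>1 \<le> c\<close> \<open>c \<le> k\<close> \<open>k < d\<close> kn by (simp add: pss)
  qed
next
  case (p c d)
  then have ic: "(if \<bar>w c\<bar> < \<bar>w d\<bar> then w c < 0 else w d < 0)" using assms(1) inv_p[of c d] by simp
  have wd: "w d > 0" using wV[of d] p by simp
  then have wc: "w c < 0" "\<bar>w c\<bar> < \<bar>w d\<bar>" using ic by (auto split: if_splits)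
  then have cZ: "k - r < c" using wY[of c] p by force
  from assms(3) show ?thesis
  proof (cases rule: base_cases)
    case (m a b)
    have "sum \<alpha> {1..a} \<le> sum \<beta> {1..a}" using ps[OF assms(4), of a] m kn by simp
    then have ca: "c \<le> a" using m p by (simp add: pss split: if_splits)
    then show ?thesis using m inv_m[of a b] wZ[of a] wV[of b] cZ by auto
  next
    case (p a b)
    have "sum \<alpha> {1..a} \<le> sum \<beta> {1..a}" using ps[OF assms(4), of a] p kn by simp
    then have ca: "c \<le> a" using p \<open>\<beta> = vadd (ev c) (ev d)\<close> \<open>k < d\<close> by (simp add: pss split: if_splits)
    have "sum \<alpha> {1..b} \<le> sum \<beta> {1..b}" using ps[OF assms(4), of b] p kn by simp
    then have bd: "d \<le> b" using p \<open>\<beta> = vadd (ev c) (ev d)\<close> \<open>k < d\<close> ca by (simp add: pss split: if_splits)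
    have "\<bar>w a\<bar> \<le> \<bar>w c\<bar>" "w d \<le> w b" "w a < 0" "w b > 0"
      using dZ'[of c a] iV'[of d b] cZ ca bd p \<open>k < d\<close> wZ[of a] wV[of b] by auto
    then show ?thesis using wc wd inv_p[of a b] p by auto
  next
    case (e a)
    have "sum \<alpha> {1..a} \<le> sum \<beta> {1..a}" using ps[OF assms(4), of a] e kn by simp
    then have "c \<le> a" using e p by (simp add: pss split: if_splits)
    then show ?thesis using e inv_e[of a] wZ[of a] cZ kn by auto
  qed
qed

lemma base_ideal: "lower_ideal n (base_region k n) (Inv n w \<inter> base_region k n)"
  unfolding lower_ideal_def using base_ideal_step by blast

lemma top_ideal_step:
  assumes "\<beta> \<in> Inv n w" "\<beta> \<in> top_region k" "\<alpha> \<in> top_region k" "root_le n \<alpha> \<beta>"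
  shows "\<alpha> \<in> Inv n w"
proof -
  obtain c d where p: "\<beta> = vadd (ev c) (ev d)" "1 \<le> c" "c < d" "d \<le> k"
    using assms(2) unfolding top_region_def by auto
  obtain a b where q: "\<alpha> = vadd (ev a) (ev b)" "1 \<le> a" "a < b" "b \<le> k"
    using assms(3) unfolding top_region_def by auto
  have ic: "(if \<bar>w c\<bar> < \<bar>w d\<bar> then w c < 0 else w d < 0)" using assms(1) inv_p[of c d] p kn by simp
  have "sum \<alpha> {1..a} \<le> sum \<beta> {1..a}" using ps[OF assms(4), of a] q kn by simp
  then have ca: "c \<le> a" using p q by (simp add: pss split: if_splits)
  have "sum \<alpha> {1..b} \<le> sum \<beta> {1..b}" using ps[OF assms(4), of b] q kn by simp
  then have bd: "d \<le> b" using p q ca by (simp add: pss split: if_splits)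
  have dZ0: "k - r < d"
  proof (rule ccontr)
    assume "\<not> k - r < d"
    then show False using wY[of c] wY[of d] ic p by (auto split: if_splits)
  qed
  then have wb: "w b < 0" using wZ[of b] bd q by simp
  show ?thesis
  proof (cases "a \<le> k - r")
    case False
    then show ?thesis using wZ[of a] wb inv_p[of a b] q kn by auto
  next
    case True
    then have "w c > 0" "w c \<le> w a" using wY[of c] iY'[of c a] ca p by auto
    then have "\<bar>w d\<bar> < w c" using ic pinj[of c d] p kn by (auto split: if_splits)
    moreover have "\<bar>w b\<bar> \<le> \<bar>w d\<bar>" using dZ'[of d b] dZ0 bd q by auto
    ultimately show ?thesis using \<open>w c \<le> w a\<close> wb inv_p[of a b] q kn by auto
  qed
qed

lemma top_ideal: "lower_ideal n (top_region k) (Inv n w \<inter> top_region k)"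
  unfolding lower_ideal_def using top_ideal_step by blast

lemma row_eq: "base_row_idx k n a = (\<lambda>x. vsub (ev a) (ev x)) ` {k<..n} \<union> (\<lambda>x. vadd (ev a) (ev x)) ` {k<..n} \<union> {ev a}"
  unfolding base_row_idx_def by auto

lemma cardV: "card {k<..n} = n - k" by simp

lemma inj_m: "a \<le> k \<Longrightarrow> inj_on (\<lambda>x. vsub (ev a) (ev x)) {k<..n}"
  unfolding inj_on_def using L1 by fastforce

lemma card_m: "a \<le> k \<Longrightarrow> card ((\<lambda>x. vsub (ev a) (ev x)) ` {k<..n}) = n - k"
  using card_image[OF inj_m] by simp

lemma sup_YY:
  assumes "1 \<le> a" "a < b" "b \<le> k - r"
  shows "vadd (ev a) (ev b) \<notin> Inv n w \<and> card (Inv n w \<inter> (base_row_idx k n a \<union> base_row_idx k n b)) \<le> 2 * n + 1 - 2 * k"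
proof
  show "vadd (ev a) (ev b) \<notin> Inv n w" using inv_p[of a b] wY[of a] wY[of b] assms kn by auto
  let ?U = "(\<lambda>x. vsub (ev a) (ev x)) ` {k<..n} \<union> (\<lambda>x. vsub (ev b) (ev x)) ` {k<..n}"
  have sub: "Inv n w \<inter> (base_row_idx k n a \<union> base_row_idx k n b) \<subseteq> ?U"
  proof
    fix \<alpha> assume h: "\<alpha> \<in> Inv n w \<inter> (base_row_idx k n a \<union> base_row_idx k n b)"
    have nz: "z \<in> {a,b} \<Longrightarrow> 1 \<le> z \<and> z \<le> k - r" for z using assms by auto
    from h obtain z where z: "z \<in> {a,b}" "\<alpha> \<in> base_row_idx k n z" "\<alpha> \<in> Inv n w" by auto
    then have wz: "w z > 0" "1 \<le> z" "z \<le> k - r" using nz[OF z(1)] wY[of z] by auto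
    from z(2) consider x where "x \<in> {k<..n}" "\<alpha> = vsub (ev z) (ev x)"
      | x where "x \<in> {k<..n}" "\<alpha> = vadd (ev z) (ev x)" | "\<alpha> = ev z"
      unfolding row_eq by blast
    then show "\<alpha> \<in> ?U"
    proof cases
      case 1 then show ?thesis using z(1) by auto
    next
      case 2
      then have "z < x" using wz by auto
      then show ?thesis using 2 z(3) inv_p[of z x] wz wV[of x] by (auto split: if_splits)
    next
      case 3
      then show ?thesis using z(3) inv_e[of z] wz kn by auto
    qed
  qed
  have "card (Inv n w \<inter> (base_row_idx k n a \<union> base_row_idx k n b)) \<le> card ?U"
    by (rule card_mono[OF _ sub]) auto
  also have "\<dots> \<le> (n - k) + (n - k)"
    using card_Un_le[of "(\<lambda>x. vsub (ev a) (ev x)) ` {k<..n}" "(\<lambda>x. vsub (ev b) (ev x)) ` {k<..n}"]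
      card_m[of a] card_m[of b] assms by simp
  finally show "card (Inv n w \<inter> (base_row_idx k n a \<union> base_row_idx k n b)) \<le> 2 * n + 1 - 2 * k"
    using kn by linarith
qed

lemma fin_C: "finite (Inv n w \<inter> (base_row_idx k n a \<union> base_row_idx k n b))"
  by (rule finite_Int) (simp add: row_eq)

lemma sup_ZZ:
  assumes "k - r < a" "a < b" "b \<le> k"
  shows "vadd (ev a) (ev b) \<in> Inv n w \<and> 2 * n + 1 - 2 * k \<le> card (Inv n w \<inter> (base_row_idx k n a \<union> base_row_idx k n b))"
proof
  show "vadd (ev a) (ev b) \<in> Inv n w" using inv_p[of a b] wZ[of a] wZ[of b] assms kn by auto
  let ?A = "(\<lambda>x. vsub (ev a) (ev x)) ` {k<..n}" and ?B = "(\<lambda>x. vsub (ev b) (ev x)) ` {k<..n}"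
  have sub: "?A \<union> ?B \<union> {ev a} \<subseteq> Inv n w \<inter> (base_row_idx k n a \<union> base_row_idx k n b)"
  proof -
    have "z \<in> {a,b} \<Longrightarrow> x \<in> {k<..n} \<Longrightarrow> vsub (ev z) (ev x) \<in> Inv n w" for z x
      using inv_m[of z x] wZ[of z] wV[of x] assms by (auto split: if_splits)
    moreover have "ev a \<in> Inv n w" using inv_e[of a] wZ[of a] assms kn by auto
    ultimately have "?A \<subseteq> Inv n w" "?B \<subseteq> Inv n w" "ev a \<in> Inv n w" by auto
    moreover have "?A \<subseteq> base_row_idx k n a" "?B \<subseteq> base_row_idx k n b" "ev a \<in> base_row_idx k n a"
      unfolding row_eq by blast+
    ultimately show ?thesis by blast
  qed
  have d1: "?A \<inter> ?B = {}"
  proof -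
    { fix x y assume "x \<in> {k<..n}" "y \<in> {k<..n}" "vsub (ev a) (ev x) = vsub (ev b) (ev y)"
      then have False using L1[of a x b y] assms by auto }
    then show ?thesis by blast
  qed
  have d2: "(?A \<union> ?B) \<inter> {ev a} = {}"
  proof -
    have "ev a \<notin> ?A"
    proof
      assume "ev a \<in> ?A"
      then obtain x where "x \<in> {k<..n}" "ev a = vsub (ev a) (ev x)" by blast
      then show False using L4[of a x a] assms by auto
    qed
    moreover have "ev a \<notin> ?B"
    proof
      assume "ev a \<in> ?B"
      then obtain x where "x \<in> {k<..n}" "ev a = vsub (ev b) (ev x)" by blast
      then show False using L4[of b x a] assms by auto
    qed
    ultimately show ?thesis by (simp only: Int_insert_right Un_iff if_False Int_empty_right simp_thms)
  qed
  have c1: "card (?A \<union> ?B \<union> {ev a}) = (n - k) + (n - k) + 1"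
    using card_Un_disjoint[of "?A \<union> ?B" "{ev a}"] card_Un_disjoint[of ?A ?B] d1 d2 card_m[of a] card_m[of b] assms
    by simp
  have c2: "card (?A \<union> ?B \<union> {ev a}) \<le> card (Inv n w \<inter> (base_row_idx k n a \<union> base_row_idx k n b))"
    by (rule card_mono[OF fin_C sub])
  show "2 * n + 1 - 2 * k \<le> card (Inv n w \<inter> (base_row_idx k n a \<union> base_row_idx k n b))"
    using kn c1 c2 by linarith
qed

lemma sup_YZ:
  assumes "1 \<le> a" "a \<le> k - r" "k - r < b" "b \<le> k"
  shows "(vadd (ev a) (ev b) \<in> Inv n w \<longrightarrow> 2 * n + 1 - 2 * k \<le> card (Inv n w \<inter> (base_row_idx k n a \<union> base_row_idx k n b)))
       \<and> (vadd (ev a) (ev b) \<notin> Inv n w \<longrightarrow> card (Inv n w \<inter> (base_row_idx k n a \<union> base_row_idx k n b)) \<le> 2 * n + 1 - 2 * k)"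
proof -
  define f where "f x = (if w x < w a then vsub (ev a) (ev x) else vadd (ev b) (ev x))" for x
  let ?V = "{k<..n}"
  let ?A = "f ` ?V" and ?B = "(\<lambda>x. vsub (ev b) (ev x)) ` ?V"
  let ?U = "?A \<union> ?B \<union> {ev b}"
  let ?C = "Inv n w \<inter> (base_row_idx k n a \<union> base_row_idx k n b)"
  have ab: "a < b" using assms by simp
  have wa: "w a > 0" using wY[of a] assms by simp
  have wb: "w b < 0" using wZ[of b] assms by simp
  have neq: "\<bar>w a\<bar> \<noteq> \<bar>w b\<bar>" using pinj[of a b] assms kn by simp
  have inv_iff: "vadd (ev a) (ev b) \<in> Inv n w \<longleftrightarrow> \<bar>w b\<bar> < w a"
    using inv_p[of a b] assms kn wa wb neq by auto
  have finU: "finite ?U" by simp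
  have cU: "card ?U \<le> (n - k) + (n - k) + 1"
  proof -
    have "card ?U \<le> card (?A \<union> ?B) + card {ev b}" by (rule card_Un_le)
    also have "\<dots> \<le> card ?A + card ?B + 1" using card_Un_le[of ?A ?B] by simp
    also have "\<dots> \<le> (n - k) + (n - k) + 1"
      using card_image_le[of ?V f] card_m[of b] assms by simp
    finally show ?thesis .
  qed
  have part1: "2 * n + 1 - 2 * k \<le> card ?C" if inv: "\<bar>w b\<bar> < w a"
  proof -
    have injf: "inj_on f ?V"
    proof (rule inj_onI)
      fix x y assume xy: "x \<in> ?V" "y \<in> ?V" "f x = f y"
      show "x = y"
      proof (cases "w x < w a")
        case True
        note tx = True
        show ?thesis
        proof (cases "w y < w a")
          case True
          then show ?thesis using xy tx L1[of a x a y] assms unfolding f_def by auto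
        next
          case False
          then show ?thesis using xy tx L3[of a x b y] assms unfolding f_def by auto
        qed
      next
        case False
        note tx = False
        show ?thesis
        proof (cases "w y < w a")
          case True
          then show ?thesis using xy tx L3[of a y b x] assms unfolding f_def by (auto simp: eq_commute)
        next
          case False
          then show ?thesis using xy tx L2[of b x b y] assms unfolding f_def by auto
        qed
      qed
    qed
    have d1: "?A \<inter> ?B = {}"
    proof -
      { fix x y assume xy: "x \<in> ?V" "y \<in> ?V" "f x = vsub (ev b) (ev y)"
        have False
        proof (cases "w x < w a")
          case True
          then show False using xy L1[of a x b y] assms unfolding f_def by auto
        next
          case False
          then show False using xy L3[of b y b x] assms unfolding f_def by (auto simp: eq_commute)
        qed }
      then show ?thesis by blast
    qed
    have d2: "(?A \<union> ?B) \<inter> {ev b} = {}"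
    proof -
      have "ev b \<notin> ?A"
      proof
        assume "ev b \<in> ?A"
        then obtain x where x: "x \<in> ?V" "ev b = f x" by blast
        show False
        proof (cases "w x < w a")
          case True
          then show False using x L4[of a x b] assms unfolding f_def by auto
        next
          case False
          then show False using x L5[of b x b] assms unfolding f_def by auto
        qed
      qed
      moreover have "ev b \<notin> ?B"
      proof
        assume "ev b \<in> ?B"
        then obtain x where "x \<in> ?V" "ev b = vsub (ev b) (ev x)" by blast
        then show False using L4[of b x b] assms by auto
      qed
      ultimately show ?thesis by (simp only: Int_insert_right Un_iff if_False Int_empty_right simp_thms)
    qed
    have c1: "card ?U = (n - k) + (n - k) + 1"
      using card_Un_disjoint[of "?A \<union> ?B" "{ev b}"] card_Un_disjoint[of ?A ?B] d1 d2
        card_image[OF injf] card_m[of b] assms by simp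
    have sub: "?U \<subseteq> ?C"
    proof -
      have "x \<in> ?V \<Longrightarrow> f x \<in> Inv n w" for x
      proof -
        assume x: "x \<in> ?V"
        then have wx: "w x > 0" "\<bar>w x\<bar> \<noteq> \<bar>w a\<bar>" using wV[of x] pinj[of x a] assms by auto
        show ?thesis
        proof (cases "w x < w a")
          case True
          then show ?thesis using inv_m[of a x] x wx wa assms unfolding f_def by auto
        next
          case False
          then show ?thesis using inv_p[of b x] x wx wa wb inv assms unfolding f_def by auto
        qed
      qed
      moreover have "x \<in> ?V \<Longrightarrow> vsub (ev b) (ev x) \<in> Inv n w" for x
        using inv_m[of b x] wb wV[of x] assms by (auto split: if_splits)
      moreover have "ev b \<in> Inv n w" using inv_e[of b] wb assms kn by auto
      ultimately have "?A \<subseteq> Inv n w" "?B \<subseteq> Inv n w" "ev b \<in> Inv n w" by auto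
      moreover have "?A \<subseteq> base_row_idx k n a \<union> base_row_idx k n b"
      proof
        fix \<alpha> assume "\<alpha> \<in> ?A"
        then obtain x where x: "x \<in> ?V" "\<alpha> = f x" by blast
        show "\<alpha> \<in> base_row_idx k n a \<union> base_row_idx k n b"
          using x unfolding f_def row_eq by (cases "w x < w a") auto
      qed
      moreover have "?B \<subseteq> base_row_idx k n b" "ev b \<in> base_row_idx k n b"
        unfolding row_eq by blast+
      ultimately show ?thesis by blast
    qed
    have c2: "card ?U \<le> card ?C" by (rule card_mono[OF fin_C sub])
    show ?thesis using kn c1 c2 by linarith
  qed
  have part2: "card ?C \<le> 2 * n + 1 - 2 * k" if ninv: "w a < \<bar>w b\<bar>"
  proof -
    have sub: "?C \<subseteq> ?U"
    proof
      fix \<alpha> assume h: "\<alpha> \<in> ?C"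
      then have aI: "\<alpha> \<in> Inv n w" by blast
      from h have "\<alpha> \<in> base_row_idx k n a \<or> \<alpha> \<in> base_row_idx k n b" by blast
      then show "\<alpha> \<in> ?U"
      proof
        assume "\<alpha> \<in> base_row_idx k n a"
        then consider x where "x \<in> ?V" "\<alpha> = vsub (ev a) (ev x)"
          | x where "x \<in> ?V" "\<alpha> = vadd (ev a) (ev x)" | "\<alpha> = ev a"
          unfolding row_eq by blast
        then show ?thesis
        proof cases
          case 1
          then have "w x > 0" "a < x" "x \<le> n" using wV[of x] assms by auto
          then have "w x < w a" using aI 1 inv_m[of a x] wa assms pinj[of x a] kn by (auto split: if_splits)
          then have "\<alpha> = f x" using 1 unfolding f_def by simp
          then show ?thesis using 1 by blast
        next
          case 2
          then have "w x > 0" "a < x" "x \<le> n" using wV[of x] assms by auto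
          then show ?thesis using aI 2 inv_p[of a x] wa assms by (auto split: if_splits)
        next
          case 3
          then show ?thesis using aI inv_e[of a] wa assms kn by auto
        qed
      next
        assume "\<alpha> \<in> base_row_idx k n b"
        then consider x where "x \<in> ?V" "\<alpha> = vsub (ev b) (ev x)"
          | x where "x \<in> ?V" "\<alpha> = vadd (ev b) (ev x)" | "\<alpha> = ev b"
          unfolding row_eq by blast
        then show ?thesis
        proof cases
          case 1
          then show ?thesis by blast
        next
          case 2
          then have "w x > 0" "b < x" "x \<le> n" using wV[of x] assms by auto
          then have "\<bar>w b\<bar> < w x" using aI 2 inv_p[of b x] wb assms by (auto split: if_splits)
          then have "\<not> w x < w a" using ninv by simp
          then have "\<alpha> = f x" using 2 unfolding f_def by simp
          then show ?thesis using 2 by blast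
        next
          case 3
          then show ?thesis by blast
        qed
      qed
    qed
    have "card ?C \<le> card ?U" by (rule card_mono[OF finU sub])
    then show ?thesis using cU kn by linarith
  qed
  show ?thesis using part1 part2 inv_iff neq wa by (cases "\<bar>w b\<bar> < w a") auto
qed

lemma support:
  assumes "1 \<le> a" "a < b" "b \<le> k"
  shows "(let c = card (Inv n w \<inter> (base_row k n (k + 1 - a) \<union> base_row k n (k + 1 - b))) in
          (c > 2 * n + 1 - 2 * k \<longrightarrow> vadd (ev a) (ev b) \<in> Inv n w) \<and>
          (c < 2 * n + 1 - 2 * k \<longrightarrow> vadd (ev a) (ev b) \<notin> Inv n w))"
proof -
  have r: "base_row k n (k + 1 - a) = base_row_idx k n a" "base_row k n (k + 1 - b) = base_row_idx k n b"
    "base_row k n (Suc k - a) = base_row_idx k n a" "base_row k n (Suc k - b) = base_row_idx k n b"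
    unfolding base_row_def using assms by auto
  show ?thesis
  proof (cases "b \<le> k - r")
    case True
    then show ?thesis using sup_YY[of a b] assms by (auto simp: r Let_def)
  next
    case False
    show ?thesis
    proof (cases "k - r < a")
      case True
      then show ?thesis using sup_ZZ[of a b] assms by (auto simp: r Let_def)
    next
      case False
      then show ?thesis using sup_YZ[of a b] assms \<open>\<not> b \<le> k - r\<close> by (auto simp: r Let_def)
    qed
  qed
qed

lemma diagram: "is_W_OG_diagram k n (Inv n w)"
  unfolding is_W_OG_diagram_def using Inv_sub base_ideal top_ideal support by blast

end

theorem lemma3p5:
  fixes k n :: nat
  assumes "1 \<le> k" and "k < n"
  shows "Y_OG k n \<subseteq> Theta k n"
proof
  fix S assume "S \<in> Y_OG k n"
  then obtain w where S: "S = Inv n w" and w: "w \<in> W_OG k n" unfolding Y_OG_def by auto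
  from w obtain r where "signed_perm n w" "r \<le> k"
      "(\<forall>a\<in>{1..k-r}. w a > 0)"
      "(\<forall>a\<in>{1..k-r}. \<forall>b\<in>{1..k-r}. a < b \<longrightarrow> w a < w b)"
      "(\<forall>a\<in>{k-r+1..k}. w a < 0)"
      "(\<forall>a\<in>{k-r+1..k}. \<forall>b\<in>{k-r+1..k}. a < b \<longrightarrow> \<bar>w a\<bar> > \<bar>w b\<bar>)"
      "(\<forall>a\<in>{k+1..n}. w a > 0)"
      "(\<forall>a\<in>{k+1..n}. \<forall>b\<in>{k+1..n}. a < b \<longrightarrow> w a < w b)"
    unfolding W_OG_def by blast
  then interpret wog k n r w using assms by unfold_locales auto
  show "S \<in> Theta k n" unfolding Theta_def S using diagram by simp
qed

end
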